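(* Let $(X,\mathcal{R})$ be an association scheme with rank $d+1\geq 4$, and let $\Gamma$ be the connected scheme graph of a relation $R_1\in\mathcal{R}$. Let $x,z\in X$ with $(x,z)\in R_a$ for some relation $R_a$ and $\mathrm{dist}_\Gamma(x,z)=i\geq 2$. Assume there exist two distinct neighbors $z_3,z_4$ of $z$ in $\Gamma$ and two distinct relations $R_b,R_c\in\mathcal{R}$ such that $(x,z_3)\in R_b$, $(x,z_4)\in R_c$, $\mathrm{dist}_\Gamma(x,z_3)=\mathrm{dist}_\Gamma(x,z_4)=i+1$, and $c_{i+1}(x,z_3)=1$. Then there exists a relation $R_e\in\mathcal{R}$ such that $p^1_{be}\neq 0$, $p^1_{ce}\neq 0$, and no pair in $R_e$ is at distance $i$ in $\Gamma$.
   Context: A (symmetric) association scheme with rank $d+1$ on a finite set $X$ is a partition $\mathcal{R}=\{R_0,\dots,R_d\}$ of $X\times X$ with $R_0$ the diagonal, each $R_i$ symmetric, and numbers $p^h_{ij}$ such that for every $(x,y)\in R_h$ the number of $z$ with $(x,z)\in R_i$, $(z,y)\in R_j$ equals $p^h_{ij}$. The scheme graph of $R_1$ is the graph on $X$ with $x\sim y$ iff $(x,y)\in R_1$. For vertices $x,y$ at distance $j$ in $\Gamma$, $c_j(x,y)$ denotes the number of neighbors of $y$ at distance $j-1$ from $x$. *)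

theory Defs
  imports Main
begin

definition assoc_scheme :: "'a set \<Rightarrow> nat \<Rightarrow> (nat \<Rightarrow> ('a \<times> 'a) set) \<Rightarrow> bool" where
  "assoc_scheme X d R \<longleftrightarrow>
     finite X \<and>
     R 0 = Id_on X \<and>
     (\<forall>i\<le>d. R i \<noteq> {} \<and> R i \<subseteq> X \<times> X \<and> converse (R i) = R i) \<and>
     (\<Union>i\<in>{..d}. R i) = X \<times> X \<and>
     (\<forall>i\<le>d. \<forall>j\<le>d. i \<noteq> j \<longrightarrow> R i \<inter> R j = {}) \<and>
     (\<forall>h\<le>d. \<forall>i\<le>d. \<forall>j\<le>d. \<exists>p. \<forall>x y. (x, y) \<in> R h \<longrightarrow>
        card {z \<in> X. (x, z) \<in> R i \<and> (z, y) \<in> R j} = p)"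

definition inter_num :: "'a set \<Rightarrow> (nat \<Rightarrow> ('a \<times> 'a) set) \<Rightarrow> nat \<Rightarrow> nat \<Rightarrow> nat \<Rightarrow> nat" where
  "inter_num X R h i j = (SOME p. \<forall>x y. (x, y) \<in> R h \<longrightarrow>
        card {z \<in> X. (x, z) \<in> R i \<and> (z, y) \<in> R j} = p)"

definition gdist :: "('a \<times> 'a) set \<Rightarrow> 'a \<Rightarrow> 'a \<Rightarrow> nat" where
  "gdist E x y = (LEAST n. (x, y) \<in> E ^^ n)"

definition gconnected :: "'a set \<Rightarrow> ('a \<times> 'a) set \<Rightarrow> bool" where
  "gconnected X E \<longleftrightarrow> (\<forall>x\<in>X. \<forall>y\<in>X. \<exists>n. (x, y) \<in> E ^^ n)"

definition c_num :: "'a set \<Rightarrow> ('a \<times> 'a) set \<Rightarrow> nat \<Rightarrow> 'a \<Rightarrow> 'a \<Rightarrow> nat" where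
  "c_num X E j x y = card {w \<in> X. (y, w) \<in> E \<and> gdist E x w = j - 1}"

end

theory Submission
  imports Defs
begin

lemma sc_fin: "assoc_scheme X d R \<Longrightarrow> finite X"
  by (simp add: assoc_scheme_def)
lemma sc_R0: "assoc_scheme X d R \<Longrightarrow> R 0 = Id_on X"
  by (simp add: assoc_scheme_def)
lemma sc_rel: "assoc_scheme X d R \<Longrightarrow> \<forall>i\<le>d. R i \<noteq> {} \<and> R i \<subseteq> X \<times> X \<and> converse (R i) = R i"
  by (simp add: assoc_scheme_def)
lemma sc_union: "assoc_scheme X d R \<Longrightarrow> (\<Union>i\<in>{..d}. R i) = X \<times> X"
  by (simp add: assoc_scheme_def)
lemma sc_disj: "assoc_scheme X d R \<Longrightarrow> \<forall>i\<le>d. \<forall>j\<le>d. i \<noteq> j \<longrightarrow> R i \<inter> R j = {}"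
  by (simp add: assoc_scheme_def)
lemma sc_reg: "assoc_scheme X d R \<Longrightarrow> \<forall>h\<le>d. \<forall>i\<le>d. \<forall>j\<le>d. \<exists>p. \<forall>x y. (x, y) \<in> R h \<longrightarrow>
        card {z \<in> X. (x, z) \<in> R i \<and> (z, y) \<in> R j} = p"
  by (simp add: assoc_scheme_def)

lemma card_nz2:
  assumes "finite X" "w \<in> X" "P w"
  shows "card {w \<in> X. P w} \<noteq> 0"
proof -
  have "finite {w \<in> X. P w}" using assms(1) by simp
  moreover have "w \<in> {w \<in> X. P w}" using assms by simp
  ultimately show ?thesis by (metis card_0_eq empty_iff)
qed

lemma sch_sub:
  assumes "assoc_scheme X d R" "h \<le> d" "(u, v) \<in> R h"
  shows "u \<in> X \<and> v \<in> X"
proof -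
  have "R h \<subseteq> X \<times> X" using sc_rel[OF assms(1)] assms(2) by simp
  then show ?thesis using assms(3) by auto
qed

lemma sch_sym:
  assumes "assoc_scheme X d R" "h \<le> d" "(u, v) \<in> R h"
  shows "(v, u) \<in> R h"
proof -
  have "converse (R h) = R h" using sc_rel[OF assms(1)] assms(2) by simp
  then show ?thesis using assms(3) by (metis converseI)
qed

lemma sch_cover:
  assumes "assoc_scheme X d R" "u \<in> X" "v \<in> X"
  shows "\<exists>h\<le>d. (u, v) \<in> R h"
proof -
  have "(u, v) \<in> (\<Union>i\<in>{..d}. R i)" using sc_union[OF assms(1)] assms(2,3) by simp
  then show ?thesis by auto
qed

lemma sch_disj:
  assumes "assoc_scheme X d R" "h \<le> d" "j \<le> d" "(u, v) \<in> R h" "(u, v) \<in> R j"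
  shows "h = j"
proof (rule ccontr)
  assume "h \<noteq> j"
  then have "R h \<inter> R j = {}" using sc_disj[OF assms(1)] assms(2,3) by simp
  then show False using assms(4,5) by auto
qed

lemma sch_card_eq:
  assumes "assoc_scheme X d R" "h \<le> d" "i \<le> d" "j \<le> d" "(u, v) \<in> R h" "(u', v') \<in> R h"
  shows "card {w \<in> X. (u, w) \<in> R i \<and> (w, v) \<in> R j} = card {w \<in> X. (u', w) \<in> R i \<and> (w, v') \<in> R j}"
proof -
  obtain p where "\<forall>x y. (x, y) \<in> R h \<longrightarrow> card {z \<in> X. (x, z) \<in> R i \<and> (z, y) \<in> R j} = p"
    using sc_reg[OF assms(1)] assms(2-4) by blast
  then show ?thesis using assms(5,6) by simp
qed

lemma sch_transfer:
  assumes "assoc_scheme X d R" "h \<le> d" "i \<le> d" "j \<le> d" "(u, v) \<in> R h" "(u', v') \<in> R h"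
    and "(u, w) \<in> R i" "(w, v) \<in> R j"
  shows "\<exists>w'. (u', w') \<in> R i \<and> (w', v') \<in> R j"
proof -
  have fin: "finite X" using sc_fin[OF assms(1)] .
  have "w \<in> X" using sch_sub[OF assms(1) assms(3) assms(7)] by blast
  then have "card {w \<in> X. (u, w) \<in> R i \<and> (w, v) \<in> R j} \<noteq> 0"
    using card_nz2[of X w "\<lambda>w. (u, w) \<in> R i \<and> (w, v) \<in> R j"] fin assms(7,8) by simp
  then have "card {w \<in> X. (u', w) \<in> R i \<and> (w, v') \<in> R j} \<noteq> 0"
    using sch_card_eq[OF assms(1-6)] by simp
  then have "{w \<in> X. (u', w) \<in> R i \<and> (w, v') \<in> R j} \<noteq> {}" by (metis card.empty)
  then show ?thesis by blast
qed

lemma inter_num_eq: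
  assumes "assoc_scheme X d R" "h \<le> d" "i \<le> d" "j \<le> d" "(u, v) \<in> R h"
  shows "inter_num X R h i j = card {w \<in> X. (u, w) \<in> R i \<and> (w, v) \<in> R j}"
proof -
  obtain p where p: "\<forall>x y. (x, y) \<in> R h \<longrightarrow> card {z \<in> X. (x, z) \<in> R i \<and> (z, y) \<in> R j} = p"
    using sc_reg[OF assms(1)] assms(2-4) by blast
  have "\<forall>x y. (x, y) \<in> R h \<longrightarrow> card {z \<in> X. (x, z) \<in> R i \<and> (z, y) \<in> R j} = inter_num X R h i j"
    unfolding inter_num_def by (rule someI[of _ p], rule p)
  then show ?thesis using assms(5) by simp
qed

lemma relpow_symm:
  assumes "\<And>a b. (a, b) \<in> E \<Longrightarrow> (b, a) \<in> E"
  shows "(u, v) \<in> E ^^ n \<Longrightarrow> (v, u) \<in> E ^^ n"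
proof (induction n arbitrary: u v)
  case 0
  then show ?case by (auto elim: relpow_0_E intro: relpow_0_I)
next
  case (Suc n)
  from Suc.prems obtain c where "(u, c) \<in> E ^^ n" "(c, v) \<in> E" by (auto elim: relpow_Suc_E)
  then have "(c, u) \<in> E ^^ n" "(v, c) \<in> E" using Suc.IH assms by auto
  then show ?case by (rule relpow_Suc_I2[rotated])
qed

lemma pow_iff:
  assumes sch: "assoc_scheme X d R" and d1: "1 \<le> d"
  shows "\<And>h u v u' v'. h \<le> d \<Longrightarrow> (u, v) \<in> R h \<Longrightarrow> (u', v') \<in> R h \<Longrightarrow>
          (u, v) \<in> R 1 ^^ n \<Longrightarrow> (u', v') \<in> R 1 ^^ n"
proof (induction n)
  case 0
  have r0: "R 0 = Id_on X" using sc_R0[OF sch] .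
  from 0 have "u = v" by (auto elim: relpow_0_E)
  then have "(u, v) \<in> R 0" using r0 sch_sub[OF sch 0(1) 0(2)] by auto
  then have "h = 0" using sch_disj[OF sch 0(1) _ 0(2)] by auto
  then have "u' = v'" using 0(3) r0 by auto
  then show ?case by (auto intro: relpow_0_I)
next
  case (Suc n)
  from Suc.prems(4) obtain w where w: "(u, w) \<in> R 1 ^^ n" "(w, v) \<in> R 1" by (auto elim: relpow_Suc_E)
  have "u \<in> X" using sch_sub[OF sch Suc.prems(1,2)] by blast
  moreover have "w \<in> X" using sch_sub[OF sch d1 w(2)] by blast
  ultimately obtain j where j: "j \<le> d" "(u, w) \<in> R j" using sch_cover[OF sch] by blast
  obtain w' where w': "(u', w') \<in> R j" "(w', v') \<in> R 1"
    using sch_transfer[OF sch Suc.prems(1) j(1) d1 Suc.prems(2,3) j(2) w(2)] by blast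
  have "(u', w') \<in> R 1 ^^ n" using Suc.IH[OF j(1) j(2) w'(1) w(1)] .
  then show ?case using w'(2) by (rule relpow_Suc_I)
qed

lemma dist_const:
  assumes sch: "assoc_scheme X d R" and d1: "1 \<le> d" and "h \<le> d"
    "(u, v) \<in> R h" "(u', v') \<in> R h"
  shows "gdist (R 1) u v = gdist (R 1) u' v'"
proof -
  have "\<And>n. (u, v) \<in> R 1 ^^ n \<longleftrightarrow> (u', v') \<in> R 1 ^^ n"
    using pow_iff[OF sch d1 assms(3)] assms(4,5) by blast
  then show ?thesis unfolding gdist_def by simp
qed

lemma gdist_le:
  "(u, v) \<in> E ^^ n \<Longrightarrow> gdist E u v \<le> n"
  unfolding gdist_def by (rule Least_le)

lemma gdist_path:
  assumes "gconnected X E" "u \<in> X" "v \<in> X"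
  shows "(u, v) \<in> E ^^ gdist E u v"
proof -
  obtain n where "(u, v) \<in> E ^^ n" using assms unfolding gconnected_def by blast
  then show ?thesis unfolding gdist_def by (rule LeastI)
qed

theorem lemma2p4:
  fixes X :: "'a set" and d :: nat and R :: "nat \<Rightarrow> ('a \<times> 'a) set"
    and x z z3 z4 :: 'a and a b c i :: nat
  assumes scheme: "assoc_scheme X d R"
    and rank: "d + 1 \<ge> 4"
    and conn: "gconnected X (R 1)"
    and xz: "x \<in> X" "z \<in> X" "a \<le> d" "(x, z) \<in> R a"
    and dxz: "gdist (R 1) x z = i" and i2: "i \<ge> 2"
    and z34: "z3 \<in> X" "z4 \<in> X" "z3 \<noteq> z4" "(z, z3) \<in> R 1" "(z, z4) \<in> R 1"
    and bc: "b \<le> d" "c \<le> d" "b \<noteq> c" "(x, z3) \<in> R b" "(x, z4) \<in> R c"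
    and d34: "gdist (R 1) x z3 = i + 1" "gdist (R 1) x z4 = i + 1"
    and c1: "c_num X (R 1) (i + 1) x z3 = 1"
  shows "\<exists>e\<le>d. inter_num X R 1 b e \<noteq> 0 \<and> inter_num X R 1 c e \<noteq> 0 \<and>
           (\<forall>u v. (u, v) \<in> R e \<longrightarrow> gdist (R 1) u v \<noteq> i)"
proof -
  have d1: "1 \<le> d" using rank by simp
  have fin: "finite X" using sc_fin[OF scheme] .
  have Esym: "\<And>p q. (p, q) \<in> R 1 \<Longrightarrow> (q, p) \<in> R 1" using sch_sym[OF scheme d1] by blast
  let ?C = "{w \<in> X. (z3, w) \<in> R 1 \<and> gdist (R 1) x w = i + 1 - 1}"
  have cardC: "card ?C = 1" using c1 unfolding c_num_def .
  have zC: "z \<in> ?C" using xz dxz Esym[OF z34(4)] by simp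
  have Cuniq: "\<And>w. w \<in> ?C \<Longrightarrow> w = z"
  proof -
    fix w assume "w \<in> ?C"
    obtain t where "?C = {t}" using cardC by (auto simp: card_Suc_eq)
    then show "w = z" using zC \<open>w \<in> ?C\<close> by auto
  qed
  obtain m where im: "i = Suc m" using i2 by (cases i) auto
  have "(x, z) \<in> R 1 ^^ i" using gdist_path[OF conn xz(1,2)] dxz by simp
  then have "(x, z) \<in> R 1 ^^ Suc m" using im by simp
  from relpow_Suc_D2[OF this] obtain w1 where w1: "(x, w1) \<in> R 1" "(w1, z) \<in> R 1 ^^ m"
    by blast
  have w1X: "w1 \<in> X" using sch_sub[OF scheme d1 w1(1)] by blast
  have dw1z: "gdist (R 1) w1 z \<le> m" using gdist_le[OF w1(2)] .
  have "(z, w1) \<in> R 1 ^^ m" using relpow_symm[OF Esym w1(2)] .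
  from relpow_Suc_I2[OF Esym[OF z34(4)] this] have "(z3, w1) \<in> R 1 ^^ i" using im by simp
  then have dz3w1: "gdist (R 1) z3 w1 \<le> i" by (rule gdist_le)
  obtain h where h: "h \<le> d" "(z3, w1) \<in> R h" using sch_cover[OF scheme z34(1) w1X] by blast
  have z3x: "(z3, x) \<in> R b" using sch_sym[OF scheme bc(1) bc(4)] .
  obtain w where w: "(x, w) \<in> R h" "(w, z3) \<in> R 1"
    using sch_transfer[OF scheme bc(1) h(1) d1 z3x bc(4) h(2) Esym[OF w1(1)]] by blast
  have wX: "w \<in> X" using sch_sub[OF scheme d1 w(2)] by blast
  have "gdist (R 1) x w = gdist (R 1) z3 w1" using dist_const[OF scheme d1 h(1) w(1) h(2)] .
  moreover have "gdist (R 1) x z3 \<le> gdist (R 1) x w + 1"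
  proof -
    have "(x, w) \<in> R 1 ^^ gdist (R 1) x w" using gdist_path[OF conn xz(1) wX] .
    then have "(x, z3) \<in> R 1 ^^ Suc (gdist (R 1) x w)" using w(2) by (rule relpow_Suc_I)
    from gdist_le[OF this] show ?thesis by simp
  qed
  ultimately have "gdist (R 1) x w = i" using dz3w1 d34(1) by simp
  then have "w \<in> ?C" using wX Esym[OF w(2)] by simp
  then have "w = z" by (rule Cuniq)
  then have "h = a" using sch_disj[OF scheme h(1) xz(3) w(1)] xz(4) by simp
  then have z3w1: "(z3, w1) \<in> R a" using h by simp
  have w1z3: "(w1, z3) \<in> R a" using sch_sym[OF scheme xz(3) z3w1] .
  obtain v where v: "(w1, v) \<in> R c" "(v, z3) \<in> R 1"
    using sch_transfer[OF scheme xz(3) bc(2) d1 xz(4) w1z3 bc(5) Esym[OF z34(5)]] by blast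
  have vX: "v \<in> X" using sch_sub[OF scheme d1 v(2)] by blast
  obtain e where e: "e \<le> d" "(x, v) \<in> R e" using sch_cover[OF scheme xz(1) vX] by blast
  have dxv: "gdist (R 1) x v \<noteq> i"
  proof
    assume "gdist (R 1) x v = i"
    then have "v \<in> ?C" using vX Esym[OF v(2)] by simp
    then have "v = z" by (rule Cuniq)
    then have "gdist (R 1) w1 z = gdist (R 1) x z4" using dist_const[OF scheme d1 bc(2) _ bc(5)] v(1) by simp
    then show False using dw1z d34(2) im by simp
  qed
  have distE: "\<forall>u u'. (u, u') \<in> R e \<longrightarrow> gdist (R 1) u u' \<noteq> i"
  proof (intro allI impI)
    fix u u' assume "(u, u') \<in> R e"
    then have "gdist (R 1) x v = gdist (R 1) u u'" using dist_const[OF scheme d1 e(1) e(2)] by blast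
    then show "gdist (R 1) u u' \<noteq> i" using dxv by simp
  qed
  have p1: "inter_num X R 1 b e \<noteq> 0"
  proof -
    have "inter_num X R 1 b e = card {w \<in> X. (z3, w) \<in> R b \<and> (w, v) \<in> R e}"
      using inter_num_eq[OF scheme d1 bc(1) e(1) Esym[OF v(2)]] .
    moreover have "card {w \<in> X. (z3, w) \<in> R b \<and> (w, v) \<in> R e} \<noteq> 0"
      using card_nz2[of X x "\<lambda>w. (z3, w) \<in> R b \<and> (w, v) \<in> R e"] fin xz(1) z3x e(2) by simp
    ultimately show ?thesis by simp
  qed
  have p2: "inter_num X R 1 c e \<noteq> 0"
  proof -
    have "inter_num X R 1 c e = card {w \<in> X. (w1, w) \<in> R c \<and> (w, x) \<in> R e}"
      using inter_num_eq[OF scheme d1 bc(2) e(1) w1(1)[THEN Esym]] .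
    moreover have "card {w \<in> X. (w1, w) \<in> R c \<and> (w, x) \<in> R e} \<noteq> 0"
      using card_nz2[of X v "\<lambda>w. (w1, w) \<in> R c \<and> (w, x) \<in> R e"] fin vX v(1) sch_sym[OF scheme e(1) e(2)] by simp
    ultimately show ?thesis by simp
  qed
  show ?thesis using e(1) p1 p2 distE by blast
qed

end
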